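(* Let $k$ be a field of characteristic $p>0$ and $A$ a $k$-vector space of finite dimension $n\ge1$. For every $r\ge0$, $S_{\le r}A\neq\bigoplus_{0\le i\le r}S^iA$.
   Context: $SA=\bigoplus_{m\ge0}S^mA$ is the symmetric algebra of $A$ ($S^0A=k$, $S^mA$ the $m$-th symmetric power, with pure symmetric tensors $a_1\otimes_s\dots\otimes_s a_m$). The linear map $\partial\colon SA\to SA\otimes A$ is given by $\partial(\lambda)=0$ for $\lambda\in S^0A$ and $\partial(a_1\otimes_s\dots\otimes_s a_m)=\sum_{i=1}^m(a_1\otimes_s\dots\otimes_s a_{i-1}\otimes_s a_{i+1}\otimes_s\dots\otimes_s a_m)\otimes a_i$. Iterates: $\partial^0=1_{SA}$ and $\partial^{r+1}:=\partial;(\partial^r\otimes 1_A)\colon SA\to SA\otimes A^{\otimes(r+1)}$. Define $S_{\le r}A:=\ker(\partial^{r+1})\subseteq SA$. *)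

theory Defs
  imports Main
begin

text \<open>Coordinates: A = k^n with basis e_0..e_(n-1). A monomial x^mu (mu :: nat => nat,
 exponents) is the pure symmetric tensor with mu i copies of e_i. An element of SA is a
 finitely supported coefficient function on monomials in the variables 0..n-1.
 An element of SA (x) A^(x)q is a function from index lists js (length q, entries < n,
 standing for e_(js!0) (x) ... (x) e_(js!(q-1))) to SA.\<close>

type_synonym 'k sym = "(nat \<Rightarrow> nat) \<Rightarrow> 'k"

definition SA :: "nat \<Rightarrow> 'k::field sym set" where
  "SA n = {f. finite {m. f m \<noteq> 0} \<and> (\<forall>m. f m \<noteq> 0 \<longrightarrow> (\<forall>i\<ge>n. m i = 0))}"

definition mdeg :: "nat \<Rightarrow> (nat \<Rightarrow> nat) \<Rightarrow> nat" where
  "mdeg n m = (\<Sum>i<n. m i)"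

text \<open>The e_j-component of the boundary of the monomial x^mu: each of the mu j factors
 equal to e_j contributes x^(mu - e_j).\<close>
definition mon_bd :: "(nat \<Rightarrow> nat) \<Rightarrow> nat \<Rightarrow> 'k::field sym" where
  "mon_bd mu j = (\<lambda>m. if 0 < mu j \<and> m = mu(j := mu j - 1) then of_nat (mu j) else 0)"

definition bd :: "'k::field sym \<Rightarrow> nat \<Rightarrow> 'k sym" where
  "bd f j = (\<lambda>m. \<Sum>mu\<in>{mu. f mu \<noteq> 0}. f mu * mon_bd mu j m)"

text \<open>Iterates: bd^0 = id, bd^(q+1) = bd ; (bd^q (x) 1_A).\<close>
fun bd_iter :: "nat \<Rightarrow> nat \<Rightarrow> 'k::field sym \<Rightarrow> nat list \<Rightarrow> 'k sym" where
  "bd_iter n 0 f = (\<lambda>js. if js = [] then f else (\<lambda>_. 0))"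
| "bd_iter n (Suc q) f = (\<lambda>js. if js \<noteq> [] \<and> last js < n
      then bd_iter n q (bd f (last js)) (butlast js) else (\<lambda>_. 0))"

definition S_le :: "nat \<Rightarrow> nat \<Rightarrow> 'k::field sym set" where
  "S_le n r = {f \<in> SA n. bd_iter n (Suc r) f = (\<lambda>_ _. 0)}"

definition S_upto :: "nat \<Rightarrow> nat \<Rightarrow> 'k::field sym set" where
  "S_upto n r = {f \<in> SA n. \<forall>m. f m \<noteq> 0 \<longrightarrow> mdeg n m \<le> r}"

end

theory Submission
  imports Defs
begin

lemma bd_zero: "bd (\<lambda>_. 0 :: 'k::field) j = (\<lambda>_. 0)"
  by (simp add: bd_def)

lemma bd_iter_zero: "bd_iter n q (\<lambda>_. 0 :: 'k::field) = (\<lambda>_ _. 0)"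
  by (induction q) (auto simp: bd_zero fun_eq_iff)

theorem proposition7p7:
  fixes n r :: nat
  assumes "CHAR('k::field) > 0" and "n \<ge> 1"
  shows "(S_le n r :: 'k sym set) \<noteq> S_upto n r"
proof
  assume eq: "(S_le n r :: 'k sym set) = S_upto n r"
  define p where "p = CHAR('k)"
  define mu :: "nat \<Rightarrow> nat" where "mu = (\<lambda>i. if i = 0 then p * (r+1) else 0)"
  define f :: "'k sym" where "f = (\<lambda>m. if m = mu then 1 else 0)"
  have supp: "{m. f m \<noteq> 0} = {mu}" by (auto simp: f_def)
  have SA: "f \<in> SA n" using assms(2) by (auto simp: SA_def supp f_def mu_def)
  have p0: "(of_nat p :: 'k) = 0" by (simp add: p_def)
  have bd0: "bd f j = (\<lambda>_. 0)" for j
  proof -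
    have "bd f j = mon_bd mu j" unfolding bd_def supp by (simp add: f_def)
    also have "\<dots> = (\<lambda>_. 0)"
      by (auto simp: mon_bd_def mu_def fun_eq_iff p0)
    finally show ?thesis .
  qed
  have "bd_iter n (Suc r) f = (\<lambda>_ _. 0)"
    by (auto simp: fun_eq_iff bd0 bd_iter_zero)
  with SA have "f \<in> S_le n r" by (simp add: S_le_def)
  with eq have "f \<in> S_upto n r" by simp
  hence "mdeg n mu \<le> r" by (auto simp: S_upto_def f_def)
  moreover have "mdeg n mu = p * (r+1)"
  proof -
    have "mdeg n mu = (\<Sum>i\<in>{0}. mu i)"
      unfolding mdeg_def using assms(2) by (intro sum.mono_neutral_right) (auto simp: mu_def)
    thus ?thesis by (simp add: mu_def)
  qed
  moreover have "p > 0" using assms(1) by (simp add: p_def)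
  moreover have "r < p * (r+1)"
  proof -
    have "r < 1 * (r+1)" by simp
    also have "\<dots> \<le> p * (r+1)" using \<open>p > 0\<close> by (intro mult_right_mono) auto
    finally show ?thesis .
  qed
  ultimately show False by linarith
qed

end
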